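(* Let $D=\{x\in X : \langle a,x\rangle=\beta\}$ with $X=[\alpha'_1,\alpha''_1]\times\cdots\times[\alpha'_n,\alpha''_n]$, where $\alpha'_i<\alpha''_i$ are finite, $a=(a_1,\dots,a_n)^\top$ has $a_i>0$ for all $i\in I=\{1,\dots,n\}$, $\beta\in\mathbb{R}$, and $D\neq\varnothing$. Let $f:\mathbb{R}^n\to\mathbb{R}$ be locally Lipschitz on $X$. Then for a point $x^*$ the following are equivalent: (1) $x^*\in D$ and there exists $g^*\in\partial^{\uparrow}f(x^* )$ such that $\langle g^*,x-x^*\rangle\ge 0$ for all $x\in D$ (i.e. $x^*$ solves the variational inequality (VI)); (2) $x^*\in D$ and there exist $g^*\in\partial^{\uparrow}f(x^* )$ and $\lambda\in\mathbb{R}$ such that $\langle g^*-\lambda a,x-x^*\rangle\ge0$ for all $x\in X$; (3) $x^*\in D$ and there exist $g^*\in\partial^{\uparrow}f(x^* )$ and $\lambda\in\mathbb{R}$ such that for each $i\in I$: $(1/a_i)g^*_i\ge\lambda$ if $x^*_i=\alpha'_i$; $(1/a_i)g^*_i=\lambda$ if $x^*_i\in(\alpha'_i,\alpha''_i)$; $(1/a_i)g^*_i\le\lambda$ if $x^*_i=\alpha''_i$; (4) $x^*\in D$ and there exists $g^*\in\partial^{\uparrow}f(x^* )$ such that for all $i,j\in I$, $i\ne j$: if $(1/a_i)g^*_i>(1/a_j)g^*_j$ then $x^*_i=\alpha'_i$ or $x^*_j=\alpha''_j$; (5) $x^*\in D$ and there exists $g^*\in\partial^{\uparrow}f(x^*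 )$ such that for all $i,j\in I$, $i\neq j$: if $x^*_i\in(\alpha'_i,\alpha''_i]$ and $x^*_j\in[\alpha'_j,\alpha''_j)$ then $(1/a_i)g^*_i\le(1/a_j)g^*_j$.
   Context: For $f$ Lipschitz continuous near $x$, the upper Clarke–Rockafellar derivative is $f^{\uparrow}(x;p)=\limsup_{y\to x,\ \alpha\searrow0}(f(y+\alpha p)-f(y))/\alpha$, and the (Clarke) generalized gradient is $\partial^{\uparrow}f(x)=\{g\in\mathbb{R}^n:\langle g,p\rangle\le f^{\uparrow}(x;p)\ \forall p\in\mathbb{R}^n\}$, a nonempty convex compact set. *)

theory Defs
  imports "HOL-Analysis.Analysis"
begin

definition clarke_dir :: "('a::real_normed_vector \<Rightarrow> real) \<Rightarrow> 'a \<Rightarrow> 'a \<Rightarrow> ereal" where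
  "clarke_dir f x p =
     Limsup (at (x, 0) within (UNIV \<times> {0<..}))
       (\<lambda>(y, \<alpha>::real). ereal ((f (y + \<alpha> *\<^sub>R p) - f y) / \<alpha>))"

definition clarke_grad :: "('a::real_inner \<Rightarrow> real) \<Rightarrow> 'a \<Rightarrow> 'a set" where
  "clarke_grad f x = {g. \<forall>p. ereal (inner g p) \<le> clarke_dir f x p}"

definition locally_lipschitz_on :: "'a::metric_space set \<Rightarrow> ('a \<Rightarrow> real) \<Rightarrow> bool" where
  "locally_lipschitz_on X f \<longleftrightarrow> (\<forall>x\<in>X. \<exists>e>0. \<exists>L. L-lipschitz_on (ball x e) f)"

definition boxX :: "real^'n \<Rightarrow> real^'n \<Rightarrow> (real^'n) set" where
  "boxX lo hi = {x. \<forall>i. lo$i \<le> x$i \<and> x$i \<le> hi$i}"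

definition feasD :: "real^'n \<Rightarrow> real^'n \<Rightarrow> real^'n \<Rightarrow> real \<Rightarrow> (real^'n) set" where
  "feasD lo hi a \<beta> = {x \<in> boxX lo hi. inner a x = \<beta>}"

end

theory Submission
  imports Defs
begin


lemma axis_comp: "axis i c $ k = (if k = i then c else (0::real))"
  by (simp add: axis_def)

lemma P1_P4:
  fixes lo hi a g xs :: "real^'n"
  assumes apos: "\<forall>i. a$i > 0" and xsD: "xs \<in> feasD lo hi a \<beta>"
    and P1: "\<forall>x\<in>feasD lo hi a \<beta>. inner g (x - xs) \<ge> 0"
  shows "\<forall>i j. i \<noteq> j \<longrightarrow> g$i / a$i > g$j / a$j \<longrightarrow> xs$i = lo$i \<or> xs$j = hi$j"
proof (intro allI impI, rule ccontr)
  fix i j assume ij: "i \<noteq> j" and r: "g$i / a$i > g$j / a$j" and n: "\<not> (xs$i = lo$i \<or> xs$j = hi$j)"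
  have box: "\<forall>k. lo$k \<le> xs$k \<and> xs$k \<le> hi$k" and ax: "inner a xs = \<beta>"
    using xsD by (auto simp: feasD_def boxX_def)
  have ai: "a$i > 0" "a$j > 0" using apos by auto
  have li: "lo$i < xs$i" and hj: "xs$j < hi$j" using box n by (metis order_le_less)+
  define t where "t = min (a$i * (xs$i - lo$i)) (a$j * (hi$j - xs$j))"
  have tpos: "t > 0" using ai li hj by (simp add: t_def)
  have t1: "t / a$i \<le> xs$i - lo$i" using ai by (simp add: t_def divide_le_eq mult.commute)
  have t2: "t / a$j \<le> hi$j - xs$j" using ai by (simp add: t_def divide_le_eq mult.commute)
  define x where "x = xs - axis i (t / a$i) + axis j (t / a$j)"
  have xk: "x$k = xs$k - (if k = i then t/a$i else 0) + (if k = j then t/a$j else 0)" for k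
    by (simp add: x_def axis_comp)
  have "x \<in> boxX lo hi"
    unfolding boxX_def
  proof (safe)
    fix k
    have p: "t/a$i > 0" "t/a$j > 0" using tpos ai by auto
    show "lo$k \<le> x$k" using box[rule_format, of k] t1 t2 p ij unfolding xk
      by auto
    show "x$k \<le> hi$k" using box[rule_format, of k] t1 t2 p ij unfolding xk
      by auto
  qed
  moreover have "inner a x = \<beta>"
    using ax ai by (simp add: x_def inner_diff_right inner_add_right inner_axis)
  ultimately have "x \<in> feasD lo hi a \<beta>" by (simp add: feasD_def)
  hence "inner g (x - xs) \<ge> 0" using P1 by blast
  moreover have "inner g (x - xs) = t * (g$j/a$j - g$i/a$i)"
    by (simp add: x_def inner_diff_right inner_add_right inner_axis algebra_simps)
  moreover have "t * (g$j/a$j - g$i/a$i) < 0" using tpos r by (simp add: mult_pos_neg)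
  ultimately show False by linarith
qed

lemma P4_P3:
  fixes lo hi a g xs :: "real^'n"
  assumes lohi: "\<forall>i. lo$i < hi$i" and xsD: "xs \<in> feasD lo hi a \<beta>"
    and P4: "\<forall>i j. i \<noteq> j \<longrightarrow> g$i / a$i > g$j / a$j \<longrightarrow> xs$i = lo$i \<or> xs$j = hi$j"
  shows "\<exists>lam::real. \<forall>i.
            (xs$i = lo$i \<longrightarrow> g$i / a$i \<ge> lam) \<and>
            (lo$i < xs$i \<and> xs$i < hi$i \<longrightarrow> g$i / a$i = lam) \<and>
            (xs$i = hi$i \<longrightarrow> g$i / a$i \<le> lam)"
proof -
  have box: "\<forall>k. lo$k \<le> xs$k \<and> xs$k \<le> hi$k"
    using xsD by (auto simp: feasD_def boxX_def)
  define r where "r k = g$k / a$k" for k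
  define A where "A = {i. lo$i < xs$i}"
  define lam where "lam = (if A = {} then Min (range r) else Max (r ` A))"
  have key: "r i \<le> r j" if "i \<in> A" "xs$j < hi$j" for i j
  proof (cases "i = j")
    case False thus ?thesis using P4[rule_format, of i j] that by (force simp: A_def r_def)
  qed simp
  have up: "r i \<le> lam" if "i \<in> A" for i
    using that by (auto simp: lam_def)
  have lowr: "lam \<le> r j" if "xs$j < hi$j" for j
  proof (cases "A = {}")
    case True thus ?thesis by (simp add: lam_def)
  next
    case False
    have "Max (r ` A) \<le> r j" using False key[OF _ that] by (simp add: Max_le_iff)
    thus ?thesis using False by (simp add: lam_def)
  qed
  show ?thesis
  proof (rule exI[of _ lam], intro allI conjI impI)
    fix i
    show "xs$i = lo$i \<Longrightarrow> g$i / a$i \<ge> lam" using lowr[of i] lohi by (simp add: r_def)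
    show "lo$i < xs$i \<and> xs$i < hi$i \<Longrightarrow> g$i / a$i = lam"
      using lowr[of i] up[of i] by (simp add: r_def A_def)
    show "xs$i = hi$i \<Longrightarrow> g$i / a$i \<le> lam" using up[of i] lohi
      by (simp add: r_def A_def)
  qed
qed

lemma P3_P2:
  fixes lo hi a g xs :: "real^'n"
  assumes apos: "\<forall>i. a$i > 0" and xsD: "xs \<in> feasD lo hi a \<beta>"
    and P3: "\<forall>i.
            (xs$i = lo$i \<longrightarrow> g$i / a$i \<ge> lam) \<and>
            (lo$i < xs$i \<and> xs$i < hi$i \<longrightarrow> g$i / a$i = lam) \<and>
            (xs$i = hi$i \<longrightarrow> g$i / a$i \<le> lam)"
  shows "\<forall>x\<in>boxX lo hi. inner (g - lam *\<^sub>R a) (x - xs) \<ge> 0"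
proof
  fix x assume x: "x \<in> boxX lo hi"
  have box: "\<forall>k. lo$k \<le> xs$k \<and> xs$k \<le> hi$k"
    using xsD by (auto simp: feasD_def boxX_def)
  have xb: "\<forall>k. lo$k \<le> x$k \<and> x$k \<le> hi$k" using x by (auto simp: boxX_def)
  have "0 \<le> (g$i - lam * a$i) * (x$i - xs$i)" for i
  proof -
    have ai: "a$i > 0" using apos by auto
    consider "xs$i = lo$i" | "lo$i < xs$i \<and> xs$i < hi$i" | "xs$i = hi$i"
      using box[rule_format, of i] by (metis order_le_less)
    thus ?thesis
    proof cases
      case 1
      hence "g$i \<ge> lam * a$i" using P3[rule_format, of i] ai by (simp add: le_divide_eq)
      thus ?thesis using 1 xb[rule_format, of i] by simp
    next
      case 2
      hence "g$i = lam * a$i" using P3[rule_format, of i] ai by (simp add: divide_eq_eq)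
      thus ?thesis by simp
    next
      case 3
      hence "g$i \<le> lam * a$i" using P3[rule_format, of i] ai by (simp add: divide_le_eq)
      thus ?thesis using 3 xb[rule_format, of i] by (simp add: mult_nonpos_nonpos)
    qed
  qed
  thus "inner (g - lam *\<^sub>R a) (x - xs) \<ge> 0"
    by (simp add: inner_vec_def sum_nonneg)
qed

lemma P2_P3:
  fixes lo hi a g xs :: "real^'n"
  assumes apos: "\<forall>i. a$i > 0" and lohi: "\<forall>i. lo$i < hi$i" and xsD: "xs \<in> feasD lo hi a \<beta>"
    and P2: "\<forall>x\<in>boxX lo hi. inner (g - lam *\<^sub>R a) (x - xs) \<ge> 0"
  shows "\<forall>i.
            (xs$i = lo$i \<longrightarrow> g$i / a$i \<ge> lam) \<and>
            (lo$i < xs$i \<and> xs$i < hi$i \<longrightarrow> g$i / a$i = lam) \<and>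
            (xs$i = hi$i \<longrightarrow> g$i / a$i \<le> lam)"
proof
  fix i
  have box: "\<forall>k. lo$k \<le> xs$k \<and> xs$k \<le> hi$k"
    using xsD by (auto simp: feasD_def boxX_def)
  have ai: "a$i > 0" using apos by auto
  have "xs + axis i c \<in> boxX lo hi" if "lo$i \<le> xs$i + c" "xs$i + c \<le> hi$i" for c
    using box that by (auto simp: boxX_def axis_comp)
  hence h: "(g$i - lam * a$i) * c \<ge> 0" if "lo$i \<le> xs$i + c" "xs$i + c \<le> hi$i" for c
    using P2 that by (force simp: inner_axis)
  have hl: "(g$i - lam * a$i) * (hi$i - xs$i) \<ge> 0" using h[of "hi$i - xs$i"] box[rule_format, of i] lohi[rule_format, of i]
    by simp
  have ll: "(g$i - lam * a$i) * (lo$i - xs$i) \<ge> 0" using h[of "lo$i - xs$i"] box[rule_format, of i] lohi[rule_format, of i]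
    by simp
  have lh: "lo$i < hi$i" using lohi by auto
  show "(xs$i = lo$i \<longrightarrow> g$i / a$i \<ge> lam) \<and>
            (lo$i < xs$i \<and> xs$i < hi$i \<longrightarrow> g$i / a$i = lam) \<and>
            (xs$i = hi$i \<longrightarrow> g$i / a$i \<le> lam)"
  proof (intro conjI impI)
    assume "xs$i = lo$i"
    hence "g$i - lam * a$i \<ge> 0" using hl lh by (simp add: zero_le_mult_iff)
    thus "g$i / a$i \<ge> lam" using ai by (simp add: le_divide_eq)
  next
    assume c: "lo$i < xs$i \<and> xs$i < hi$i"
    hence "g$i - lam * a$i \<ge> 0" "g$i - lam * a$i \<le> 0" using hl ll
      by (simp_all add: zero_le_mult_iff)
    thus "g$i / a$i = lam" using ai by (simp add: divide_eq_eq)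
  next
    assume "xs$i = hi$i"
    hence "g$i - lam * a$i \<le> 0" using ll lh by (simp add: zero_le_mult_iff)
    thus "g$i / a$i \<le> lam" using ai by (simp add: divide_le_eq)
  qed
qed

lemma P2_P1:
  fixes lo hi a g xs :: "real^'n"
  assumes xsD: "xs \<in> feasD lo hi a \<beta>"
    and P2: "\<forall>x\<in>boxX lo hi. inner (g - lam *\<^sub>R a) (x - xs) \<ge> 0"
  shows "\<forall>x\<in>feasD lo hi a \<beta>. inner g (x - xs) \<ge> 0"
proof
  fix x assume x: "x \<in> feasD lo hi a \<beta>"
  have "inner a (x - xs) = 0" using x xsD by (simp add: feasD_def inner_diff_right)
  moreover have "inner (g - lam *\<^sub>R a) (x - xs) \<ge> 0" using P2 x by (simp add: feasD_def)
  ultimately show "inner g (x - xs) \<ge> 0" by (simp add: inner_diff_left)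
qed

lemma P4_P5:
  fixes lo hi a g xs :: "real^'n"
  assumes xsD: "xs \<in> feasD lo hi a \<beta>"
  shows "(\<forall>i j. i \<noteq> j \<longrightarrow> g$i / a$i > g$j / a$j \<longrightarrow> xs$i = lo$i \<or> xs$j = hi$j) \<longleftrightarrow>
     (\<forall>i j. i \<noteq> j \<longrightarrow>
            (lo$i < xs$i \<and> xs$i \<le> hi$i) \<longrightarrow> (lo$j \<le> xs$j \<and> xs$j < hi$j) \<longrightarrow>
            g$i / a$i \<le> g$j / a$j)"
proof -
  have box: "\<forall>k. lo$k \<le> xs$k \<and> xs$k \<le> hi$k"
    using xsD by (auto simp: feasD_def boxX_def)
  show ?thesis using box by (metis not_le order_le_less)
qed

lemma bexcong: "(\<And>g. c \<Longrightarrow> P g = Q g) \<Longrightarrow> (c \<and> (\<exists>g\<in>G. P g)) = (c \<and> (\<exists>g\<in>G. Q g))"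
  by blast

theorem proposition2p2:
  fixes lo hi a :: "real^'n" and \<beta> :: real and f :: "real^'n \<Rightarrow> real" and xs :: "real^'n"
  assumes lohi: "\<forall>i. lo$i < hi$i"
    and apos: "\<forall>i. a$i > 0"
    and Dne: "feasD lo hi a \<beta> \<noteq> {}"
    and lip: "locally_lipschitz_on (boxX lo hi) f"
  defines "D \<equiv> feasD lo hi a \<beta>" and "X \<equiv> boxX lo hi"
  shows
   "((xs \<in> D \<and> (\<exists>g\<in>clarke_grad f xs. \<forall>x\<in>D. inner g (x - xs) \<ge> 0))
     \<longleftrightarrow> (xs \<in> D \<and> (\<exists>g\<in>clarke_grad f xs. \<exists>lam::real.
            \<forall>x\<in>X. inner (g - lam *\<^sub>R a) (x - xs) \<ge> 0)))
  \<and> ((xs \<in> D \<and> (\<exists>g\<in>clarke_grad f xs. \<exists>lam::real.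
            \<forall>x\<in>X. inner (g - lam *\<^sub>R a) (x - xs) \<ge> 0))
     \<longleftrightarrow> (xs \<in> D \<and> (\<exists>g\<in>clarke_grad f xs. \<exists>lam::real. \<forall>i.
            (xs$i = lo$i \<longrightarrow> g$i / a$i \<ge> lam) \<and>
            (lo$i < xs$i \<and> xs$i < hi$i \<longrightarrow> g$i / a$i = lam) \<and>
            (xs$i = hi$i \<longrightarrow> g$i / a$i \<le> lam))))
  \<and> ((xs \<in> D \<and> (\<exists>g\<in>clarke_grad f xs. \<exists>lam::real. \<forall>i.
            (xs$i = lo$i \<longrightarrow> g$i / a$i \<ge> lam) \<and>
            (lo$i < xs$i \<and> xs$i < hi$i \<longrightarrow> g$i / a$i = lam) \<and>
            (xs$i = hi$i \<longrightarrow> g$i / a$i \<le> lam)))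
     \<longleftrightarrow> (xs \<in> D \<and> (\<exists>g\<in>clarke_grad f xs. \<forall>i j. i \<noteq> j \<longrightarrow>
            g$i / a$i > g$j / a$j \<longrightarrow> xs$i = lo$i \<or> xs$j = hi$j)))
  \<and> ((xs \<in> D \<and> (\<exists>g\<in>clarke_grad f xs. \<forall>i j. i \<noteq> j \<longrightarrow>
            g$i / a$i > g$j / a$j \<longrightarrow> xs$i = lo$i \<or> xs$j = hi$j))
     \<longleftrightarrow> (xs \<in> D \<and> (\<exists>g\<in>clarke_grad f xs. \<forall>i j. i \<noteq> j \<longrightarrow>
            (lo$i < xs$i \<and> xs$i \<le> hi$i) \<longrightarrow> (lo$j \<le> xs$j \<and> xs$j < hi$j) \<longrightarrow>
            g$i / a$i \<le> g$j / a$j)))"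
  
proof -
  have D: "D = feasD lo hi a \<beta>" and X: "X = boxX lo hi" by (simp_all add: D_def X_def)
  have e12: "(\<forall>x\<in>feasD lo hi a \<beta>. inner g (x - xs) \<ge> 0) \<longleftrightarrow>
    (\<exists>lam::real. \<forall>x\<in>boxX lo hi. inner (g - lam *\<^sub>R a) (x - xs) \<ge> 0)"
    if xsD: "xs \<in> feasD lo hi a \<beta>" for g
  proof
    assume h: "\<forall>x\<in>feasD lo hi a \<beta>. inner g (x - xs) \<ge> 0"
    obtain lam where "\<forall>i.
            (xs$i = lo$i \<longrightarrow> g$i / a$i \<ge> lam) \<and>
            (lo$i < xs$i \<and> xs$i < hi$i \<longrightarrow> g$i / a$i = lam) \<and>
            (xs$i = hi$i \<longrightarrow> g$i / a$i \<le> lam)"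
      using P4_P3[OF lohi xsD P1_P4[OF apos xsD h]] by blast
    thus "\<exists>lam::real. \<forall>x\<in>boxX lo hi. inner (g - lam *\<^sub>R a) (x - xs) \<ge> 0"
      using P3_P2[OF apos xsD] by blast
  next
    assume "\<exists>lam::real. \<forall>x\<in>boxX lo hi. inner (g - lam *\<^sub>R a) (x - xs) \<ge> 0"
    then obtain lam where "\<forall>x\<in>boxX lo hi. inner (g - lam *\<^sub>R a) (x - xs) \<ge> 0" by blast
    thus "\<forall>x\<in>feasD lo hi a \<beta>. inner g (x - xs) \<ge> 0" using P2_P1[OF xsD] by blast
  qed
  have e23: "(\<exists>lam::real. \<forall>x\<in>boxX lo hi. inner (g - lam *\<^sub>R a) (x - xs) \<ge> 0) \<longleftrightarrow>
    (\<exists>lam::real. \<forall>i.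
            (xs$i = lo$i \<longrightarrow> g$i / a$i \<ge> lam) \<and>
            (lo$i < xs$i \<and> xs$i < hi$i \<longrightarrow> g$i / a$i = lam) \<and>
            (xs$i = hi$i \<longrightarrow> g$i / a$i \<le> lam))"
    if xsD: "xs \<in> feasD lo hi a \<beta>" for g
    using P3_P2[OF apos xsD] P2_P3[OF apos lohi xsD] by blast
  have e34: "(\<exists>lam::real. \<forall>i.
            (xs$i = lo$i \<longrightarrow> g$i / a$i \<ge> lam) \<and>
            (lo$i < xs$i \<and> xs$i < hi$i \<longrightarrow> g$i / a$i = lam) \<and>
            (xs$i = hi$i \<longrightarrow> g$i / a$i \<le> lam)) \<longleftrightarrow>
     (\<forall>i j. i \<noteq> j \<longrightarrow> g$i / a$i > g$j / a$j \<longrightarrow> xs$i = lo$i \<or> xs$j = hi$j)"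
    if xsD: "xs \<in> feasD lo hi a \<beta>" for g
  proof
    assume "\<exists>lam::real. \<forall>i.
            (xs$i = lo$i \<longrightarrow> g$i / a$i \<ge> lam) \<and>
            (lo$i < xs$i \<and> xs$i < hi$i \<longrightarrow> g$i / a$i = lam) \<and>
            (xs$i = hi$i \<longrightarrow> g$i / a$i \<le> lam)"
    then obtain lam where l: "\<forall>x\<in>boxX lo hi. inner (g - lam *\<^sub>R a) (x - xs) \<ge> 0"
      using P3_P2[OF apos xsD] by blast
    show "\<forall>i j. i \<noteq> j \<longrightarrow> g$i / a$i > g$j / a$j \<longrightarrow> xs$i = lo$i \<or> xs$j = hi$j"
      using P1_P4[OF apos xsD P2_P1[OF xsD l]] .
  qed (rule P4_P3[OF lohi xsD])
  show ?thesis unfolding D X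
    apply (intro conjI)
       apply (rule bexcong, erule e12)
      apply (rule bexcong, erule e23)
     apply (rule bexcong, erule e34)
    apply (rule bexcong, erule P4_P5)
    done
qed

end
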